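(* Let $I$ be an index set, $S,T\in GL(2,\mathbb R)$, and for $r\in I$ let $P_r=S\,\mathrm{diag}\{p_{1r},p_{2r}\}S^{-1}$, $Q_r=T\,\mathrm{diag}\{q_{1r},q_{2r}\}T^{-1}$ with all $p_{kr},q_{kr}$ nonzero real numbers. There exists a homeomorphism $f\colon\overline{\mathbb R}\to\overline{\mathbb R}$ with $f(P_r(x))=Q_r(f(x))$ for all $x\in\overline{\mathbb R}$, $r\in I$, if and only if there exists a real number $\alpha\neq-1$ such that $$\frac{q_{1r}}{q_{2r}}=\frac{p_{1r}}{p_{2r}}\Bigl|\frac{p_{1r}}{p_{2r}}\Bigr|^{\alpha}\quad\text{for all }r\in I.$$
   Context: $\overline{\mathbb R}=\mathbb R\cup\{\infty\}$ is the extended real line (real projective line). A matrix $\begin{pmatrix}a&b\\c&d\end{pmatrix}\in GL(2,\mathbb R)$ acts on $\overline{\mathbb R}$ by $x\mapsto\frac{ax+b}{cx+d}$. *)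

theory Defs
  imports "HOL-Analysis.Analysis"
begin

datatype pline = Fin real | Infty

text \<open>Its usual topology (one-point compactification of the reals): a set is open iff its
  finite part is open in \<open>\<real>\<close> and, if it contains \<open>\<infinity>\<close>, it contains all
  \<open>x\<close> with \<open>|x|\<close> large.\<close>
instantiation pline :: topological_space
begin

definition open_pline :: "pline set \<Rightarrow> bool" where
  "open_pline U \<longleftrightarrow> open {x. Fin x \<in> U} \<and>
     (Infty \<in> U \<longrightarrow> (\<exists>R. \<forall>x. \<bar>x\<bar> > R \<longrightarrow> Fin x \<in> U))"

instance
proof
  show "open (UNIV :: pline set)" by (simp add: open_pline_def)
next
  fix U V :: "pline set"
  assume U: "open U" and V: "open V"
  have "{x. Fin x \<in> U \<inter> V} = {x. Fin x \<in> U} \<inter> {x. Fin x \<in> V}" by auto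
  moreover have "Infty \<in> U \<inter> V \<longrightarrow> (\<exists>R. \<forall>x. \<bar>x\<bar> > R \<longrightarrow> Fin x \<in> U \<inter> V)"
  proof
    assume "Infty \<in> U \<inter> V"
    then obtain R1 R2 where "\<forall>x. \<bar>x\<bar> > R1 \<longrightarrow> Fin x \<in> U" "\<forall>x. \<bar>x\<bar> > R2 \<longrightarrow> Fin x \<in> V"
      using U V unfolding open_pline_def by blast
    then show "\<exists>R. \<forall>x. \<bar>x\<bar> > R \<longrightarrow> Fin x \<in> U \<inter> V"
      by (intro exI[of _ "max R1 R2"]) auto
  qed
  ultimately show "open (U \<inter> V)" using U V unfolding open_pline_def by auto
next
  fix K :: "pline set set"
  assume K: "\<forall>S\<in>K. open S"
  have "{x. Fin x \<in> \<Union>K} = (\<Union>S\<in>K. {x. Fin x \<in> S})" by auto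
  hence "open {x. Fin x \<in> \<Union>K}" using K unfolding open_pline_def by auto
  moreover have "Infty \<in> \<Union>K \<longrightarrow> (\<exists>R. \<forall>x. \<bar>x\<bar> > R \<longrightarrow> Fin x \<in> \<Union>K)"
    using K unfolding open_pline_def by blast
  ultimately show "open (\<Union>K)" unfolding open_pline_def by blast
qed

end

fun mobius :: "real^2^2 \<Rightarrow> pline \<Rightarrow> pline" where
  "mobius M (Fin x) =
     (if M$2$1 * x + M$2$2 = 0 then Infty
      else Fin ((M$1$1 * x + M$1$2) / (M$2$1 * x + M$2$2)))"
| "mobius M Infty = (if M$2$1 = 0 then Infty else Fin (M$1$1 / M$2$1))"

definition diag2 :: "real \<Rightarrow> real \<Rightarrow> real^2^2" where
  "diag2 a b = vector [vector [a, 0], vector [0, b]]"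

end

theory Submission
  imports Defs
begin


lemma mm_entry: "((A::real^2^2) ** B)$i$j = A$i$1*B$1$j + A$i$2*B$2$j"
  by (simp add: matrix_matrix_mult_def sum_2)

lemma mobius_comp:
  fixes A B :: "real^2^2"
  assumes dA: "det A \<noteq> 0" and dB: "det B \<noteq> 0"
  shows "mobius (A ** B) x = mobius A (mobius B x)"
proof -
  define a where "a = A$1$1" define b where "b = A$1$2"
  define c where "c = A$2$1" define d where "d = A$2$2"
  define a' where "a' = B$1$1" define b' where "b' = B$1$2"
  define c' where "c' = B$2$1" define d' where "d' = B$2$2"
  have e: "(A**B)$1$1 = a*a'+b*c'" "(A**B)$1$2 = a*b'+b*d'"
     "(A**B)$2$1 = c*a'+d*c'" "(A**B)$2$2 = c*b'+d*d'"
    by (simp_all add: mm_entry a_def b_def c_def d_def a'_def b'_def c'_def d'_def)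
  have dA': "a*d - b*c \<noteq> 0" using dA by (simp add: det_2 a_def b_def c_def d_def)
  have dB': "a'*d' - b'*c' \<noteq> 0" using dB by (simp add: det_2 a'_def b'_def c'_def d'_def)
  note defs = a_def[symmetric] b_def[symmetric] c_def[symmetric] d_def[symmetric]
     a'_def[symmetric] b'_def[symmetric] c'_def[symmetric] d'_def[symmetric]
  show ?thesis
  proof (cases x)
    case (Fin y)
    define u where "u = a'*y+b'"
    define v where "v = c'*y+d'"
    have dn: "(c * a' + d * c') * y + (c * b' + d * d') = c * u + d * v" by (simp add: u_def v_def algebra_simps)
    have nm: "(a * a' + b * c') * y + (a * b' + b * d') = a * u + b * v" by (simp add: u_def v_def algebra_simps)
    show ?thesis
    proof (cases "v = 0")
      case True
      have "d' = - (c' * y)" using True v_def by simp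
      hence "a' * d' - b' * c' = - c' * u" by (simp add: u_def algebra_simps)
      hence "u \<noteq> 0" using dB' by auto
      then show ?thesis using True Fin
        by (simp add: e dn nm defs v_def[symmetric] u_def[symmetric])
    next
      case False
      have 1: "c * u / v + d = (c * u+d * v)/v" using False by (simp add: field_simps)
      have 2: "a * u / v + b = (a * u+b * v)/v" using False by (simp add: field_simps)
      show ?thesis using False Fin
        by (simp add: e dn nm defs v_def[symmetric] u_def[symmetric] 1 2)
    qed
  next
    case Infty
    show ?thesis
    proof (cases "c' = 0")
      case True
      then have "a' \<noteq> 0" using dB' by auto
      then show ?thesis using True Infty by (simp add: e defs)
    next
      case False
      have 1: "d + c * a' / c' = (c * a' + d * c') / c'" using False by (simp add: field_simps)
      have 2: "b + a * a' / c' = (a * a' + b * c') / c'" using False by (simp add: field_simps)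
      show ?thesis using False Infty by (simp add: e defs 1 2 add.commute)
    qed
  qed
qed
lemma minv: assumes "invertible (A::real^2^2)"
  shows "A ** matrix_inv A = mat 1" "matrix_inv A ** A = mat 1"
proof -
  have "\<exists>A'::real^2^2. A ** A' = mat 1 \<and> A' ** A = mat 1" using assms by (simp add: invertible_def)
  hence "A ** matrix_inv A = mat 1 \<and> matrix_inv A ** A = mat 1"
    unfolding matrix_inv_def by (rule someI_ex)
  thus "A ** matrix_inv A = mat 1" "matrix_inv A ** A = mat 1" by auto
qed

lemma inv_det: assumes "invertible (A::real^2^2)" shows "det (matrix_inv A) \<noteq> 0" "det A \<noteq> 0"
proof -
  have "invertible (matrix_inv A)" using minv[OF assms] unfolding invertible_def by blast
  thus "det (matrix_inv A) \<noteq> 0" by (simp add: invertible_det_nz)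
  show "det A \<noteq> 0" using assms by (simp add: invertible_det_nz)
qed

lemma mobius_id: "mobius (mat 1) x = x"
  by (cases x) (auto simp: mat_def)

fun sc :: "real \<Rightarrow> pline \<Rightarrow> pline" where
  "sc l (Fin x) = Fin (l * x)" | "sc l Infty = Infty"

lemma diag2_entries: "diag2 a b $1$1 = a" "diag2 a b $1$2 = 0" "diag2 a b $2$1 = 0" "diag2 a b $2$2 = b"
  by (simp_all add: diag2_def)

lemma det_diag2: "det (diag2 a b) = a * b" by (simp add: det_2 diag2_entries)

lemma mobius_diag2: "q \<noteq> 0 \<Longrightarrow> mobius (diag2 p q) x = sc (p/q) x"
  by (cases x) (simp_all add: diag2_entries)

lemma mobius_inv1: "invertible A \<Longrightarrow> mobius A (mobius (matrix_inv A) x) = x"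
  by (simp add: mobius_comp[symmetric] inv_det minv mobius_id)

lemma mobius_inv2: "invertible A \<Longrightarrow> mobius (matrix_inv A) (mobius A x) = x"
  by (simp add: mobius_comp[symmetric] inv_det minv mobius_id)

lemma mobius_conj:
  assumes "invertible S" "p \<noteq> 0" "q \<noteq> 0"
  shows "mobius (S ** diag2 p q ** matrix_inv S) (mobius S x) = mobius S (sc (p/q) x)"
proof -
  have d: "det S \<noteq> 0" "det (matrix_inv S) \<noteq> 0" "det (diag2 p q) \<noteq> 0"
    using inv_det[OF assms(1)] assms by (auto simp: det_diag2)
  have "mobius (S ** diag2 p q ** matrix_inv S) (mobius S x) = mobius (S ** diag2 p q ** matrix_inv S ** S) x"
    by (rule mobius_comp[symmetric]) (use d in \<open>auto simp: det_mul\<close>)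
  also have "S ** diag2 p q ** matrix_inv S ** S = S ** diag2 p q"
    by (simp add: matrix_mul_assoc[symmetric] minv[OF assms(1)])
  also have "mobius (S ** diag2 p q) x = mobius S (sc (p/q) x)"
    using d assms by (simp add: mobius_comp mobius_diag2)
  finally show ?thesis .
qed


definition J :: "real \<Rightarrow> pline" where "J y = (if y = 0 then Infty else Fin (1/y))"

lemma open_Fin_vimage: "open U \<Longrightarrow> open (Fin -` U)"
  by (simp add: open_pline_def vimage_def)

lemma open_J_vimage:
  assumes U: "open (U::pline set)" shows "open (J -` U)"
proof -
  define A where "A = (-{0}) \<inter> (\<lambda>y::real. 1/y) -` (Fin -` U)"
  have oA: "open A"
  proof -
    have "continuous_on (-{0::real}) (\<lambda>y. 1/y)" by (intro continuous_intros) auto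
    hence "open ((-{0::real}) \<inter> (\<lambda>y. 1/y) -` (Fin -` U))"
      using open_Fin_vimage[OF U] by (intro continuous_open_preimage) auto
    thus ?thesis by (simp add: A_def)
  qed
  show ?thesis
  proof (cases "Infty \<in> U")
    case False
    have "J -` U = A" using False by (auto simp: A_def J_def split: if_splits)
    thus ?thesis using oA by simp
  next
    case True
    then obtain R where R: "\<forall>x. \<bar>x\<bar> > R \<longrightarrow> Fin x \<in> U" using U by (auto simp: open_pline_def)
    define R' where "R' = max R 1"
    have R'pos: "R' > 0" by (simp add: R'_def)
    have "ball 0 (1/R') \<subseteq> J -` U"
    proof
      fix y :: real assume y: "y \<in> ball 0 (1/R')"
      show "y \<in> J -` U"
      proof (cases "y = 0")
        case True thus ?thesis using \<open>Infty \<in> U\<close> by (simp add: J_def)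
      next
        case False
        have "\<bar>y\<bar> < 1/R'" using y by simp
        have "R' < 1/\<bar>y\<bar>" using False \<open>\<bar>y\<bar> < 1/R'\<close> R'pos by (simp add: field_simps)
        hence "\<bar>1/y\<bar> > R" by (simp add: R'_def)
        thus ?thesis using R False by (simp add: J_def)
      qed
    qed
    moreover have "J -` U = A \<union> ball 0 (1/R')"
      using \<open>ball 0 (1/R') \<subseteq> J -` U\<close> True R'pos by (auto simp: A_def J_def split: if_splits)
    ultimately show ?thesis using oA by auto
  qed
qed

lemma open_pline_iff: "open (U::pline set) \<longleftrightarrow> open (Fin -` U) \<and> open (J -` U)"
proof
  assume "open U" thus "open (Fin -` U) \<and> open (J -` U)" using open_Fin_vimage open_J_vimage by auto
next
  assume a: "open (Fin -` U) \<and> open (J -` U)"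
  have "\<exists>R. \<forall>x. \<bar>x\<bar> > R \<longrightarrow> Fin x \<in> U" if "Infty \<in> U"
  proof -
    have "0 \<in> J -` U" using that by (simp add: J_def)
    then obtain e where e: "e > 0" "ball 0 e \<subseteq> J -` U" using a open_contains_ball by blast
    show ?thesis
    proof (intro exI[of _ "1/e"] allI impI)
      fix x :: real assume x: "\<bar>x\<bar> > 1/e"
      hence "x \<noteq> 0" using e by auto
      have "\<bar>1/x\<bar> < e" using x e \<open>x \<noteq> 0\<close> by (simp add: field_simps)
      hence "1/x \<in> ball 0 e" by (simp add: dist_real_def)
      hence "1/x \<in> J -` U" using e(2) by blast
      thus "Fin x \<in> U" using \<open>x \<noteq> 0\<close> by (simp add: J_def)
    qed
  qed
  thus "open U" using a by (auto simp: open_pline_def vimage_def)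
qed

lemma cont_Fin: "continuous_on UNIV Fin"
  by (simp add: continuous_on_open_vimage open_Fin_vimage)

lemma cont_J: "continuous_on UNIV J"
  by (simp add: continuous_on_open_vimage open_J_vimage)

lemma cont_pline:
  fixes F :: "pline \<Rightarrow> pline"
  assumes "continuous_on UNIV (F \<circ> Fin)" "continuous_on UNIV (F \<circ> J)"
  shows "continuous_on UNIV F"
proof -
  have "open (F -` B)" if "open B" for B
  proof -
    have "open ((F \<circ> Fin) -` B)" "open ((F \<circ> J) -` B)"
      using assms that by (simp_all add: continuous_on_open_vimage comp_def)
    thus ?thesis unfolding open_pline_iff by (simp add: vimage_comp)
  qed
  thus ?thesis by (simp add: continuous_on_open_vimage)
qed



definition mob4 :: "real \<Rightarrow> real \<Rightarrow> real \<Rightarrow> real \<Rightarrow> real \<Rightarrow> pline" where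
  "mob4 a b c d y = (if c * y + d = 0 then Infty else Fin ((a * y + b) / (c * y + d)))"

lemma cont_mob4:
  assumes det: "a * d - b * c \<noteq> 0"
  shows "continuous_on UNIV (mob4 a b c d)"
proof -
  define A1 where "A1 = {y::real. c * y + d \<noteq> 0}"
  define A2 where "A2 = {y::real. a * y + b \<noteq> 0}"
  have o1: "open A1" unfolding A1_def by (intro open_Collect_neq continuous_intros)
  have o2: "open A2" unfolding A2_def by (intro open_Collect_neq continuous_intros)
  have U: "A1 \<union> A2 = UNIV"
  proof (rule ccontr)
    assume "A1 \<union> A2 \<noteq> UNIV"
    then obtain y where "c * y + d = 0" "a * y + b = 0" by (auto simp: A1_def A2_def)
    hence "a * (c * y + d) - c * (a * y + b) = 0" by simp
    hence "a * d - b * c = 0" by (simp add: algebra_simps)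
    thus False using det by simp
  qed
  have c1: "continuous_on A1 (mob4 a b c d)"
  proof -
    have "continuous_on A1 (\<lambda>y. Fin ((a * y + b) / (c * y + d)))"
      by (rule continuous_on_compose2[OF cont_Fin _ subset_UNIV])
         (intro continuous_intros, auto simp: A1_def)
    thus ?thesis by (rule continuous_on_cong[THEN iffD1, rotated 2]) (auto simp: mob4_def A1_def)
  qed
  have c2: "continuous_on A2 (mob4 a b c d)"
  proof -
    have "continuous_on A2 (\<lambda>y. J ((c * y + d) / (a * y + b)))"
      by (rule continuous_on_compose2[OF cont_J _ subset_UNIV])
         (intro continuous_intros, auto simp: A2_def)
    thus ?thesis by (rule continuous_on_cong[THEN iffD1, rotated 2]) (auto simp: mob4_def A2_def J_def)
  qed
  show ?thesis using continuous_on_open_Un[OF o1 o2 c1 c2] U by simp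
qed

lemma mobius_Fin: "mobius M \<circ> Fin = mob4 (M$1$1) (M$1$2) (M$2$1) (M$2$2)"
  by (rule ext) (simp add: mob4_def)

lemma mobius_J: "mobius M \<circ> J = mob4 (M$1$2) (M$1$1) (M$2$2) (M$2$1)"
proof (rule ext)
  fix y :: real
  show "(mobius M \<circ> J) y = mob4 (M$1$2) (M$1$1) (M$2$2) (M$2$1) y"
  proof (cases "y = 0")
    case True thus ?thesis by (simp add: mob4_def J_def)
  next
    case False
    have 1: "M$2$1 * (1/y) + M$2$2 = (M$2$2 * y + M$2$1) / y" using False by (simp add: field_simps)
    have 2: "M$1$1 * (1/y) + M$1$2 = (M$1$2 * y + M$1$1) / y" using False by (simp add: field_simps)
    show ?thesis using False by (simp add: mob4_def J_def 1 2 del: times_divide_eq_right)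
  qed
qed

lemma cont_mobius:
  assumes "det M \<noteq> 0" shows "continuous_on UNIV (mobius M)"
proof (rule cont_pline)
  have d: "M$1$1 * M$2$2 - M$1$2 * M$2$1 \<noteq> 0" using assms by (simp add: det_2)
  show "continuous_on UNIV (mobius M \<circ> Fin)" unfolding mobius_Fin by (rule cont_mob4) (use d in simp)
  show "continuous_on UNIV (mobius M \<circ> J)" unfolding mobius_J by (rule cont_mob4) (use d in \<open>simp add: algebra_simps\<close>)
qed

lemma homeoI:
  assumes "continuous_on UNIV f" "continuous_on UNIV g" "\<And>x. g (f x) = x" "\<And>y. f (g y) = y"
  shows "homeomorphism UNIV UNIV f g"
  unfolding homeomorphism_def using assms by (auto intro: image_eqI[of _ f, OF sym[OF assms(4)]] image_eqI[of _ g, OF sym[OF assms(3)]])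

lemma homeo_mobius:
  assumes "invertible A" shows "homeomorphism UNIV UNIV (mobius A) (mobius (matrix_inv A))"
  using assms by (intro homeoI cont_mobius) (simp_all add: inv_det mobius_inv1 mobius_inv2)



definition pw :: "real \<Rightarrow> real \<Rightarrow> real" where "pw g x = sgn x * \<bar>x\<bar> powr g"

lemma pw_nonneg: "x \<ge> 0 \<Longrightarrow> pw g x = x powr g"
  by (cases "x = 0") (auto simp: pw_def)

lemma pw_nonpos: "x \<le> 0 \<Longrightarrow> pw g x = - ((-x) powr g)"
  by (cases "x = 0") (auto simp: pw_def)

lemma cont_pw: assumes "g > 0" shows "continuous_on UNIV (pw g)"
proof -
  have c1: "continuous_on {0..} (pw g)"
  proof -
    have "continuous_on {0..} (\<lambda>x::real. x powr g)"
      using assms by (intro continuous_on_powr' continuous_intros) auto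
    thus ?thesis by (rule continuous_on_cong[THEN iffD1, rotated 2]) (auto simp: pw_nonneg)
  qed
  have c2: "continuous_on {..0} (pw g)"
  proof -
    have "continuous_on {..0} (\<lambda>x::real. - ((-x) powr g))"
      using assms by (intro continuous_on_powr' continuous_intros) auto
    thus ?thesis by (rule continuous_on_cong[THEN iffD1, rotated 2]) (auto simp: pw_nonpos)
  qed
  have "{0::real..} \<union> {..0} = UNIV" by auto
  thus ?thesis using continuous_on_closed_Un[OF closed_atLeast closed_atMost c1 c2] by simp
qed

lemma pw_mult: "pw g (a * b) = pw g a * pw g b"
  by (simp add: pw_def sgn_mult abs_mult powr_mult)

lemma pw_zero_iff[simp]: "pw g x = 0 \<longleftrightarrow> x = 0"
  by (simp add: pw_def sgn_zero_iff)

lemma pw_0[simp]: "pw g 0 = 0" by (simp add: pw_def)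

lemma pw_recip: "pw g (1/y) = 1 / pw g y"
proof (cases y "0::real" rule: linorder_cases)
  case less
  have e: "(- (1 / y)) powr g = 1 / (- y) powr g" using powr_divide[of 1 "-y" g] less by simp
  thus ?thesis using less by (simp add: pw_def)
qed (simp_all add: pw_def powr_divide abs_divide)

lemma pw_inv: assumes "g \<noteq> 0" shows "pw (1/g) (pw g x) = x"
proof -
  have "sgn (pw g x) = sgn x" by (cases "x = 0") (auto simp: pw_def sgn_mult)
  moreover have "\<bar>pw g x\<bar> = \<bar>x\<bar> powr g" by (simp add: pw_def abs_mult)
  ultimately show ?thesis using assms
    by (cases "x = 0") (simp_all add: pw_def powr_powr sgn_mult_abs)
qed

lemma pw_alpha: "l \<noteq> 0 \<Longrightarrow> l * \<bar>l\<bar> powr a = pw (1 + a) l"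
  by (simp add: pw_def powr_add mult.assoc[symmetric] sgn_mult_abs)

fun Php :: "real \<Rightarrow> pline \<Rightarrow> pline" where
  "Php g (Fin x) = Fin (pw g x)" | "Php g Infty = Infty"

fun Phm :: "real \<Rightarrow> pline \<Rightarrow> pline" where
  "Phm g (Fin x) = J (pw g x)" | "Phm g Infty = Fin 0"

lemma cont_Php: assumes "g > 0" shows "continuous_on UNIV (Php g)"
proof (rule cont_pline)
  have "Php g \<circ> Fin = (\<lambda>x. Fin (pw g x))" by auto
  thus "continuous_on UNIV (Php g \<circ> Fin)"
    using continuous_on_compose2[OF cont_Fin cont_pw[OF assms] subset_UNIV] by simp
  have "Php g \<circ> J = (\<lambda>x. J (pw g x))" by (auto simp: J_def pw_recip)
  thus "continuous_on UNIV (Php g \<circ> J)"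
    using continuous_on_compose2[OF cont_J cont_pw[OF assms] subset_UNIV] by simp
qed

lemma cont_Phm: assumes "g > 0" shows "continuous_on UNIV (Phm g)"
proof (rule cont_pline)
  have "Phm g \<circ> Fin = (\<lambda>x. J (pw g x))" by auto
  thus "continuous_on UNIV (Phm g \<circ> Fin)"
    using continuous_on_compose2[OF cont_J cont_pw[OF assms] subset_UNIV] by simp
  have "Phm g \<circ> J = (\<lambda>x. Fin (pw g x))" by (auto simp: J_def pw_recip)
  thus "continuous_on UNIV (Phm g \<circ> J)"
    using continuous_on_compose2[OF cont_Fin cont_pw[OF assms] subset_UNIV] by simp
qed

lemma Php_inv: "g \<noteq> 0 \<Longrightarrow> Php (1/g) (Php g x) = x"
  by (cases x) (simp_all add: pw_inv)

lemma Phm_inv: assumes "g \<noteq> 0" shows "Phm (1/g) (Phm g x) = x"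
proof (cases x)
  case (Fin y) thus ?thesis using assms by (cases "y = 0") (simp_all add: J_def pw_recip pw_inv)
qed (simp add: J_def)

lemma homeo_Php: "g > 0 \<Longrightarrow> homeomorphism UNIV UNIV (Php g) (Php (1/g))"
  by (rule homeoI) (auto intro: cont_Php simp: Php_inv[of g] Php_inv[of "1/g", simplified])

lemma homeo_Phm: "g > 0 \<Longrightarrow> homeomorphism UNIV UNIV (Phm g) (Phm (1/g))"
  by (rule homeoI) (auto intro: cont_Phm simp: Phm_inv[of g] Phm_inv[of "1/g", simplified])

lemma sc_J: "m \<noteq> 0 \<Longrightarrow> sc m (J y) = J (y / m)"
  by (simp add: J_def)

lemma Php_sc: "Php g (sc l x) = sc (pw g l) (Php g x)"
  by (cases x) (simp_all add: pw_mult)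

lemma Phm_sc: assumes "l \<noteq> 0" shows "Phm g (sc l x) = sc (1 / pw g l) (Phm g x)"
  using assms by (cases x) (simp_all add: pw_mult sc_J mult.commute)



lemma pw_neg: "pw (-g) x = 1 / pw g x"
  by (cases x "0::real" rule: linorder_cases) (simp_all add: pw_def powr_minus divide_inverse)

lemma transfer_back:
  fixes I :: "'i set" and S T :: "real^2^2" and p1 p2 q1 q2 :: "'i \<Rightarrow> real"
  assumes invS: "invertible S" and invT: "invertible T"
    and nz: "\<forall>r\<in>I. p1 r \<noteq> 0 \<and> p2 r \<noteq> 0 \<and> q1 r \<noteq> 0 \<and> q2 r \<noteq> 0"
    and hom: "homeomorphism UNIV UNIV \<Phi> \<Psi>"
    and eq: "\<forall>r\<in>I. \<forall>z. \<Phi> (sc (p1 r / p2 r) z) = sc (q1 r / q2 r) (\<Phi> z)"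
  shows "\<exists>f g. homeomorphism (UNIV :: pline set) UNIV f g \<and>
            (\<forall>r\<in>I. \<forall>x. f (mobius (S ** diag2 (p1 r) (p2 r) ** matrix_inv S) x)
                       = mobius (T ** diag2 (q1 r) (q2 r) ** matrix_inv T) (f x))"
proof (intro exI conjI)
  let ?f = "mobius T \<circ> (\<Phi> \<circ> mobius (matrix_inv S))"
  let ?g = "(mobius S \<circ> \<Psi>) \<circ> mobius (matrix_inv T)"
  show "homeomorphism UNIV UNIV ?f ?g"
    by (rule homeomorphism_compose[OF homeomorphism_compose[OF homeo_mobius[OF invS, THEN homeomorphism_symD] hom] homeo_mobius[OF invT]])
  show "\<forall>r\<in>I. \<forall>x. ?f (mobius (S ** diag2 (p1 r) (p2 r) ** matrix_inv S) x)
                       = mobius (T ** diag2 (q1 r) (q2 r) ** matrix_inv T) (?f x)"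
  proof (intro ballI allI)
    fix r x assume r: "r \<in> I"
    define z where "z = mobius (matrix_inv S) x"
    have x: "x = mobius S z" by (simp add: z_def mobius_inv1[OF invS])
    have "?f (mobius (S ** diag2 (p1 r) (p2 r) ** matrix_inv S) x) = mobius T (\<Phi> (sc (p1 r / p2 r) z))"
      using nz r by (simp add: x mobius_conj[OF invS] mobius_inv2[OF invS])
    also have "\<dots> = mobius T (sc (q1 r / q2 r) (\<Phi> z))" using eq r by simp
    also have "\<dots> = mobius (T ** diag2 (q1 r) (q2 r) ** matrix_inv T) (mobius T (\<Phi> z))"
      using nz r by (simp add: mobius_conj[OF invT])
    also have "mobius T (\<Phi> z) = ?f x" by (simp add: z_def)
    finally show "?f (mobius (S ** diag2 (p1 r) (p2 r) ** matrix_inv S) x)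
                       = mobius (T ** diag2 (q1 r) (q2 r) ** matrix_inv T) (?f x)" .
  qed
qed

lemma backward:
  fixes I :: "'i set" and S T :: "real^2^2" and p1 p2 q1 q2 :: "'i \<Rightarrow> real"
  assumes invS: "invertible S" and invT: "invertible T"
    and nz: "\<forall>r\<in>I. p1 r \<noteq> 0 \<and> p2 r \<noteq> 0 \<and> q1 r \<noteq> 0 \<and> q2 r \<noteq> 0"
    and a: "\<alpha> \<noteq> -1" and rel: "\<forall>r\<in>I. q1 r / q2 r = (p1 r / p2 r) * \<bar>p1 r / p2 r\<bar> powr \<alpha>"
  shows "\<exists>f g. homeomorphism (UNIV :: pline set) UNIV f g \<and>
            (\<forall>r\<in>I. \<forall>x. f (mobius (S ** diag2 (p1 r) (p2 r) ** matrix_inv S) x)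
                       = mobius (T ** diag2 (q1 r) (q2 r) ** matrix_inv T) (f x))"
proof -
  have mu: "q1 r / q2 r = pw (1 + \<alpha>) (p1 r / p2 r)" if "r \<in> I" for r
    using rel nz that pw_alpha[of "p1 r / p2 r" \<alpha>] by auto
  show ?thesis
  proof (cases "1 + \<alpha> > 0")
    case True
    show ?thesis
      by (rule transfer_back[OF invS invT nz homeo_Php[OF True]]) (simp add: Php_sc mu)
  next
    case False
    hence g: "-(1 + \<alpha>) > 0" using a by auto
    show ?thesis
    proof (rule transfer_back[OF invS invT nz homeo_Phm[OF g]], intro ballI allI)
      fix r z assume r: "r \<in> I"
      have "p1 r / p2 r \<noteq> 0" using nz r by auto
      thus "Phm (- (1 + \<alpha>)) (sc (p1 r / p2 r) z) = sc (q1 r / q2 r) (Phm (- (1 + \<alpha>)) z)"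
      proof -
        have "1 / pw (- (1 + \<alpha>)) (p1 r / p2 r) = pw (1 + \<alpha>) (p1 r / p2 r)"
          by (simp only: pw_neg) simp
        thus ?thesis using Phm_sc[OF \<open>p1 r / p2 r \<noteq> 0\<close>, of "- (1 + \<alpha>)" z] mu[OF r] by simp
      qed
    qed
  qed
qed



lemma trans_int:
  fixes K :: "real \<Rightarrow> real"
  assumes tr: "\<And>u. K (u + a) = K u + b"
  shows "K (u + of_int n * a) = K u + of_int n * b"
proof -
  have nat: "K (v + of_nat k * a) = K v + of_nat k * b" for v k
  proof (induction k)
    case (Suc k)
    have "K (v + of_nat (Suc k) * a) = K ((v + of_nat k * a) + a)" by (simp add: algebra_simps)
    also have "\<dots> = K (v + of_nat k * a) + b" by (rule tr)
    also have "\<dots> = K v + of_nat (Suc k) * b" using Suc by (simp add: algebra_simps)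
    finally show ?case .
  qed simp
  show ?thesis
  proof (cases "n \<ge> 0")
    case True
    then obtain k where "n = int k" by (metis nonneg_eq_int)
    thus ?thesis using nat by simp
  next
    case False
    then obtain k where k: "n = - int k" by (metis neg_int_cases nat_less_le not_le)
    have "K ((u - of_nat k * a) + of_nat k * a) = K (u - of_nat k * a) + of_nat k * b" by (rule nat)
    thus ?thesis using k by simp
  qed
qed

lemma rigid_pos:
  fixes K :: "real \<Rightarrow> real"
  assumes mono: "\<And>x y. x < y \<Longrightarrow> K x < K y"
    and tr: "\<And>u. K (u + a) = K u + b" and tr0: "\<And>u. K (u + a0) = K u + b0" and a0: "a0 > 0"
  shows "b * a0 = b0 * a"
proof -
  have b0: "b0 > 0" using mono[of 0 a0] tr0[of 0] a0 by simp
  have key: "of_int m * b < of_int n * b0" if "of_int m * a < of_int n * a0" for m n :: int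
    using mono[OF that] trans_int[of K a b 0 m, OF tr] trans_int[of K a0 b0 0 n, OF tr0] by simp
  show ?thesis
  proof (rule ccontr)
    assume ne: "b * a0 \<noteq> b0 * a"
    show False
    proof (cases "a / a0 < b / b0")
      case True
      then obtain q where q: "q \<in> \<rat>" "a / a0 < q" "q < b / b0" using Rats_dense_in_real by blast
      then obtain n m :: int where nm: "m > 0" "q = of_int n / of_int m" by (metis Rats_cases')
      have "of_int m * a < of_int n * a0" using q(2) nm a0 by (simp add: field_simps)
      hence "of_int m * b < of_int n * b0" by (rule key)
      thus False using q(3) nm b0 by (simp add: field_simps)
    next
      case False
      hence "b / b0 < a / a0" using ne a0 b0 by (simp add: field_simps)
      then obtain q where q: "q \<in> \<rat>" "b / b0 < q" "q < a / a0" using Rats_dense_in_real by blast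
      then obtain n m :: int where nm: "m > 0" "q = of_int n / of_int m" by (metis Rats_cases')
      have "of_int n * a0 < of_int m * a" using q(3) nm a0 by (simp add: field_simps)
      hence "of_int (-m) * a < of_int (-n) * a0" by simp
      hence "of_int (-m) * b < of_int (-n) * b0" by (rule key)
      thus False using q(2) nm b0 by (simp add: field_simps)
    qed
  qed
qed

lemma rigid_inc:
  fixes K :: "real \<Rightarrow> real"
  assumes mono: "\<And>x y. x < y \<Longrightarrow> K x < K y"
    and tr: "\<And>u. K (u + a) = K u + b" and tr0: "\<And>u. K (u + a0) = K u + b0" and a0: "a0 \<noteq> 0"
  shows "b * a0 = b0 * a"
proof (cases "a0 > 0")
  case True thus ?thesis using rigid_pos[OF mono tr tr0] by blast
next
  case False
  hence a0': "-a0 > 0" using a0 by simp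
  have tr0': "K (u + - a0) = K u + - b0" for u using tr0[of "u - a0"] by simp
  show ?thesis using rigid_pos[OF mono tr tr0' a0'] by simp
qed

lemma rigid:
  fixes K :: "real \<Rightarrow> real"
  assumes mono: "strict_mono_on UNIV K \<or> strict_antimono_on UNIV K"
    and tr: "\<And>u. K (u + a) = K u + b" and tr0: "\<And>u. K (u + a0) = K u + b0" and a0: "a0 \<noteq> 0"
  shows "b * a0 = b0 * a"
  using mono
proof
  assume "strict_mono_on UNIV K"
  hence "\<And>x y. x < y \<Longrightarrow> K x < K y" by (simp add: strict_mono_on_def)
  thus ?thesis using rigid_inc tr tr0 a0 by blast
next
  assume "strict_antimono_on UNIV K"
  hence m: "\<And>x y. x < y \<Longrightarrow> - K x < - K y" by (simp add: monotone_on_def)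
  have "(-b) * a0 = (-b0) * a"
    by (rule rigid_inc[of "\<lambda>x. - K x", OF m]) (simp_all add: tr tr0 a0)
  thus ?thesis by simp
qed



lemma kfun:
  assumes hom: "homeomorphism UNIV UNIV h hi"
    and f0: "h (Fin 0) \<in> {Fin 0, Infty}" and fI: "h Infty \<in> {Fin 0, Infty}"
  obtains k where "\<forall>y. y \<noteq> 0 \<longrightarrow> h (Fin y) = Fin (k y) \<and> k y \<noteq> 0"
    "\<forall>t. t \<noteq> 0 \<longrightarrow> (\<exists>y. y \<noteq> 0 \<and> k y = t)" "continuous_on (-{0}) k"
    "\<forall>y y'. y \<noteq> 0 \<longrightarrow> y' \<noteq> 0 \<longrightarrow> k y = k y' \<longrightarrow> y = y'"
proof -
  have hi1: "\<And>x. hi (h x) = x" and h1: "\<And>y. h (hi y) = y" and ch: "continuous_on UNIV h"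
    using hom by (auto simp: homeomorphism_def)
  have inj: "x = x'" if "h x = h x'" for x x'
  proof -
    have "hi (h x) = hi (h x')" using that by simp
    thus ?thesis using hi1 by simp
  qed
  have ne: "h (Fin 0) \<noteq> h Infty" using inj by blast
  define k where "k y = (case h (Fin y) of Fin t \<Rightarrow> t | Infty \<Rightarrow> 0)" for y
  have hk: "h (Fin y) = Fin (k y) \<and> k y \<noteq> 0" if y: "y \<noteq> 0" for y
  proof -
    have "h (Fin y) \<notin> {Fin 0, Infty}"
    proof
      assume "h (Fin y) \<in> {Fin 0, Infty}"
      hence "h (Fin y) = h (Fin 0) \<or> h (Fin y) = h Infty" using f0 fI ne by auto
      hence "Fin y = Fin 0 \<or> Fin y = Infty" using inj by blast
      thus False using y by simp
    qed
    then obtain t where "h (Fin y) = Fin t" "t \<noteq> 0" by (cases "h (Fin y)") auto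
    thus ?thesis by (simp add: k_def)
  qed
  have ks: "\<exists>y. y \<noteq> 0 \<and> k y = t" if t: "t \<noteq> 0" for t
  proof -
    have "hi (Fin t) \<notin> {Fin 0, Infty}"
    proof
      assume "hi (Fin t) \<in> {Fin 0, Infty}"
      hence "Fin t \<in> {Fin 0, Infty}" using f0 fI h1[of "Fin t"] by auto
      thus False using t by simp
    qed
    then obtain y where y: "hi (Fin t) = Fin y" "y \<noteq> 0" by (cases "hi (Fin t)") auto
    have "Fin (k y) = Fin t" using hk[OF y(2)] h1[of "Fin t"] y(1) by simp
    thus ?thesis using y by auto
  qed
  have ki: "y = y'" if "y \<noteq> 0" "y' \<noteq> 0" "k y = k y'" for y y'
  proof -
    have "h (Fin y) = h (Fin y')" using hk that by simp
    hence "Fin y = Fin y'" by (rule inj)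
    thus ?thesis by simp
  qed
  have kc: "continuous_on (-{0}) k"
    unfolding continuous_on_open_vimage[OF open_Compl[OF closed_singleton]]
  proof (intro allI impI)
    fix B :: "real set" assume B: "open B"
    have oB: "open (Fin ` B)" using B by (auto simp: open_pline_def vimage_def image_iff)
    have "open (h -` (Fin ` B))" using ch oB by (simp add: continuous_on_open_vimage)
    hence o2: "open (Fin -` (h -` (Fin ` B)))" by (rule open_Fin_vimage)
    have "k -` B \<inter> - {0} = Fin -` (h -` (Fin ` B)) \<inter> -{0}"
    proof (intro set_eqI iffI)
      fix y assume "y \<in> k -` B \<inter> - {0}"
      thus "y \<in> Fin -` (h -` (Fin ` B)) \<inter> -{0}" using hk[of y] by auto
    next
      fix y assume y: "y \<in> Fin -` (h -` (Fin ` B)) \<inter> -{0}"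
      hence "Fin (k y) \<in> Fin ` B" using hk[of y] by auto
      hence "k y \<in> B" by auto
      thus "y \<in> k -` B \<inter> - {0}" using y by auto
    qed
    thus "open (k -` B \<inter> - {0})" using o2 by auto
  qed
  show ?thesis using that[of k] hk ks kc ki by blast
qed

lemma same_sign:
  fixes k :: "real \<Rightarrow> real"
  assumes kc: "continuous_on (-{0}) k" and nz: "\<forall>y. y \<noteq> 0 \<longrightarrow> k y \<noteq> 0"
    and ab: "a \<le> b" "a > 0 \<or> b < 0"
  shows "k a * k b > 0"
proof -
  have sub: "{a..b} \<subseteq> -{0}" using ab by auto
  have c: "continuous_on {a..b} k" using continuous_on_subset[OF kc sub] .
  have a0: "a \<noteq> 0" "b \<noteq> 0" using ab by auto
  show ?thesis
  proof (rule ccontr)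
    assume "\<not> k a * k b > 0"
    hence "(k a \<le> 0 \<and> 0 \<le> k b) \<or> (k b \<le> 0 \<and> 0 \<le> k a)" by (auto simp: zero_less_mult_iff)
    then obtain x where "a \<le> x" "x \<le> b" "k x = 0"
    proof
      assume "k a \<le> 0 \<and> 0 \<le> k b"
      thus ?thesis using IVT'[of k a 0 b, OF _ _ ab(1) c] that by blast
    next
      assume "k b \<le> 0 \<and> 0 \<le> k a"
      thus ?thesis using IVT2'[of k b 0 a, OF _ _ ab(1) c] that by blast
    qed
    moreover have "x \<noteq> 0" using \<open>a \<le> x\<close> \<open>x \<le> b\<close> ab by auto
    ultimately show False using nz by auto
  qed
qed

lemma same_sign2:
  fixes k :: "real \<Rightarrow> real"
  assumes kc: "continuous_on (-{0}) k" and nz: "\<forall>y. y \<noteq> 0 \<longrightarrow> k y \<noteq> 0"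
    and ab: "(a > 0 \<and> b > 0) \<or> (a < 0 \<and> b < 0)"
  shows "sgn (k a) = sgn (k b)"
proof -
  have "k a * k b > 0"
  proof (cases "a \<le> b")
    case True thus ?thesis using same_sign[OF kc nz True] ab by auto
  next
    case False thus ?thesis using same_sign[OF kc nz, of b a] ab by (auto simp: mult.commute)
  qed
  thus ?thesis by (auto simp: zero_less_mult_iff sgn_if)
qed

lemma ksign:
  fixes k :: "real \<Rightarrow> real"
  assumes kc: "continuous_on (-{0}) k" and nz: "\<forall>y. y \<noteq> 0 \<longrightarrow> k y \<noteq> 0"
    and ks: "\<forall>t. t \<noteq> 0 \<longrightarrow> (\<exists>y. y \<noteq> 0 \<and> k y = t)"
  shows "\<forall>y. y \<noteq> 0 \<longrightarrow> sgn (k y) = sgn y * sgn (k 1)"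
proof -
  have k1: "k 1 \<noteq> 0" using nz by simp
  have pos: "sgn (k y) = sgn (k 1)" if "y > 0" for y by (rule same_sign2[OF kc nz]) (use that in simp)
  have neg: "sgn (k y) = sgn (k (-1))" if "y < 0" for y by (rule same_sign2[OF kc nz]) (use that in simp)
  have opp: "sgn (k (-1)) = - sgn (k 1)"
  proof -
    have "- k 1 \<noteq> 0" using k1 by simp
    then obtain y where y: "y \<noteq> 0" "k y = - k 1" using ks by blast
    have "sgn (k y) = - sgn (k 1)" using y(2) by (simp add: sgn_minus)
    moreover have "y < 0"
    proof (rule ccontr)
      assume "\<not> y < 0" hence "y > 0" using y(1) by simp
      hence "sgn (k y) = sgn (k 1)" by (rule pos)
      thus False using \<open>sgn (k y) = - sgn (k 1)\<close> k1 by (simp add: sgn_zero_iff)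
    qed
    ultimately show ?thesis using neg[OF \<open>y < 0\<close>] by simp
  qed
  show ?thesis
  proof (intro allI impI)
    fix y :: real assume "y \<noteq> 0"
    show "sgn (k y) = sgn y * sgn (k 1)"
    proof (cases "y > 0")
      case True thus ?thesis using pos[OF True] by simp
    next
      case False hence "y < 0" using \<open>y \<noteq> 0\<close> by simp
      thus ?thesis using neg[OF \<open>y < 0\<close>] opp by simp
    qed
  qed
qed



lemma sc_sc: "sc a (sc b x) = sc (a * b) x" by (cases x) simp_all
lemma sc_one: "sc 1 x = x" by (cases x) simp_all

lemma caseA:
  assumes hom: "homeomorphism UNIV UNIV h hi"
    and l: "l = 1 \<or> l = -1"
    and eq: "\<forall>z. h (sc l z) = sc m (h z)"
  shows "m = l"
proof -
  have hi1: "\<And>x. hi (h x) = x" and h1: "\<And>y. h (hi y) = y"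
    using hom by (auto simp: homeomorphism_def)
  define z where "z = hi (Fin 1)"
  have hz: "h z = Fin 1" by (simp add: z_def h1)
  show ?thesis using l
  proof
    assume l1: "l = 1"
    have "h z = sc m (h z)" using eq[rule_format, of z] by (simp add: l1 sc_one)
    thus ?thesis using hz l1 by simp
  next
    assume l1: "l = -1"
    have "h (sc l (sc l z)) = sc m (sc m (h z))" using eq by simp
    hence "h z = sc (m * m) (h z)" using l1 by (simp add: sc_sc sc_one)
    hence mm: "m * m = 1" using hz by simp
    show ?thesis
    proof (rule ccontr)
      assume "m \<noteq> l"
      hence m1: "m = 1" using mm l1 by (metis minus_mult_minus mult_cancel_left1 square_eq_iff)
      have "h (sc l (Fin 1)) = h (Fin 1)" using eq[rule_format, of "Fin 1"] m1 by (simp only: sc_one)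
      hence "hi (h (sc l (Fin 1))) = hi (h (Fin 1))" by simp
      thus False using l1 hi1 by simp
    qed
  qed
qed

lemma caseB:
  fixes l m :: "'i \<Rightarrow> real"
  assumes hom: "homeomorphism UNIV UNIV h hi"
    and nz: "\<forall>r\<in>I. l r \<noteq> 0 \<and> m r \<noteq> 0"
    and eq: "\<forall>r\<in>I. \<forall>z. h (sc (l r) z) = sc (m r) (h z)"
    and r0: "r0 \<in> I" and L: "\<bar>l r0\<bar> \<noteq> 1"
  shows "\<exists>\<alpha>. \<alpha> \<noteq> -1 \<and> (\<forall>r\<in>I. m r = l r * \<bar>l r\<bar> powr \<alpha>)"
proof -
  have hi1: "\<And>x. hi (h x) = x" and h1: "\<And>y. h (hi y) = y"
    using hom by (auto simp: homeomorphism_def)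
  have inj: "x = x'" if "h x = h x'" for x x'
  proof -
    have "hi (h x) = hi (h x')" using that by simp
    thus ?thesis using hi1 by simp
  qed
  have eq0: "h (sc (l r0) z) = sc (m r0) (h z)" for z using eq r0 by blast
  have M1: "m r0 \<noteq> 1"
  proof
    assume "m r0 = 1"
    hence "h (sc (l r0) (Fin 1)) = h (Fin 1)" using eq0[of "Fin 1"] by (simp only: sc_one)
    hence "sc (l r0) (Fin 1) = Fin 1" by (rule inj)
    thus False using L by simp
  qed
  have fixpt: "h x \<in> {Fin 0, Infty}" if "sc (l r0) x = x" for x
  proof (cases "h x")
    case (Fin y)
    have "h x = sc (m r0) (h x)" using eq0[of x] that by simp
    hence "y = m r0 * y" using Fin by simp
    hence "(m r0 - 1) * y = 0" by (simp add: algebra_simps)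
    hence "y = 0" using M1 by simp
    thus ?thesis using Fin by simp
  qed simp
  have f0: "h (Fin 0) \<in> {Fin 0, Infty}" by (rule fixpt) simp
  have fI: "h Infty \<in> {Fin 0, Infty}" by (rule fixpt) simp
  obtain k where hk: "\<forall>y. y \<noteq> 0 \<longrightarrow> h (Fin y) = Fin (k y) \<and> k y \<noteq> 0"
    and ks: "\<forall>t. t \<noteq> 0 \<longrightarrow> (\<exists>y. y \<noteq> 0 \<and> k y = t)" and kc: "continuous_on (-{0}) k"
    and ki: "\<forall>y y'. y \<noteq> 0 \<longrightarrow> y' \<noteq> 0 \<longrightarrow> k y = k y' \<longrightarrow> y = y'"
    using kfun[OF hom f0 fI] by blast
  have knz: "\<forall>y. y \<noteq> 0 \<longrightarrow> k y \<noteq> 0" using hk by blast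
  have sgnk: "\<forall>y. y \<noteq> 0 \<longrightarrow> sgn (k y) = sgn y * sgn (k 1)" by (rule ksign[OF kc knz ks])
  have keq: "k (l r * y) = m r * k y" if r: "r \<in> I" and y: "y \<noteq> 0" for r y
  proof -
    have ly: "l r * y \<noteq> 0" using nz r y by simp
    have "h (sc (l r) (Fin y)) = sc (m r) (h (Fin y))" using eq r by blast
    hence "Fin (k (l r * y)) = Fin (m r * k y)" using hk ly y by simp
    thus ?thesis by simp
  qed
  have k1: "sgn (k 1) \<noteq> 0" using knz by (simp add: sgn_zero_iff)
  have sgnm: "sgn (m r) = sgn (l r)" if r: "r \<in> I" for r
  proof -
    have "sgn (k (l r * 1)) = sgn (m r * k 1)" using keq[OF r, of 1] by simp
    moreover have "sgn (k (l r * 1)) = sgn (l r) * sgn (k 1)" using sgnk[rule_format, of "l r"] nz r by simp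
    ultimately have "sgn (l r) * sgn (k 1) = sgn (m r) * sgn (k 1)" by (auto simp: sgn_mult)
    thus ?thesis using k1 by simp
  qed
  define K where "K u = ln \<bar>k (exp u)\<bar>" for u
  have kexp: "k (exp u) \<noteq> 0" for u using knz by simp
  have Kc: "continuous_on UNIV K"
  proof -
    have "continuous_on UNIV (\<lambda>u. k (exp u))"
      by (rule continuous_on_compose2[OF kc]) (auto intro: continuous_intros)
    hence "continuous_on UNIV (\<lambda>u. ln \<bar>k (exp u)\<bar>)"
      using kexp by (intro continuous_intros) auto
    thus ?thesis by (simp add: K_def[abs_def])
  qed
  have Ki: "inj_on K UNIV"
  proof (rule inj_onI)
    fix u v assume "K u = K v"
    hence a: "\<bar>k (exp u)\<bar> = \<bar>k (exp v)\<bar>" using kexp by (simp add: K_def)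
    have "sgn (k (exp u)) = sgn (k 1)" using sgnk[rule_format, of "exp u"] by simp
    moreover have "sgn (k (exp v)) = sgn (k 1)" using sgnk[rule_format, of "exp v"] by simp
    ultimately have "sgn (k (exp u)) = sgn (k (exp v))" by simp
    hence "k (exp u) = k (exp v)" using a by (metis sgn_mult_abs)
    hence "exp u = exp v" using ki[rule_format, of "exp u" "exp v"] by simp
    thus "u = v" by simp
  qed
  have mono: "strict_mono_on UNIV K \<or> strict_antimono_on UNIV K"
    using injective_eq_monotone_map[of UNIV K] Kc Ki by simp
  have trK: "K (u + 2 * ln \<bar>l r\<bar>) = K u + 2 * ln \<bar>m r\<bar>" if r: "r \<in> I" for r u
  proof -
    have l0: "l r \<noteq> 0" and m0: "m r \<noteq> 0" using nz r by auto
    have "exp (u + 2 * ln \<bar>l r\<bar>) = exp u * (exp (ln \<bar>l r\<bar>) * exp (ln \<bar>l r\<bar>))"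
      by (simp add: exp_add[symmetric] algebra_simps)
    also have "\<dots> = l r * (l r * exp u)" using l0 by simp
    finally have e: "exp (u + 2 * ln \<bar>l r\<bar>) = l r * (l r * exp u)" .
    have "k (l r * (l r * exp u)) = m r * (m r * k (exp u))"
      using keq[OF r] l0 by simp
    hence "K (u + 2 * ln \<bar>l r\<bar>) = ln (\<bar>m r\<bar> * (\<bar>m r\<bar> * \<bar>k (exp u)\<bar>))"
      by (simp add: K_def e abs_mult)
    also have "\<dots> = K u + 2 * ln \<bar>m r\<bar>" using m0 kexp by (simp add: ln_mult K_def)
    finally show ?thesis .
  qed
  define a0 where "a0 = 2 * ln \<bar>l r0\<bar>"
  define b0 where "b0 = 2 * ln \<bar>m r0\<bar>"
  have a0: "a0 \<noteq> 0" using L nz r0 by (simp add: a0_def)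
  have rel: "(2 * ln \<bar>m r\<bar>) * a0 = b0 * (2 * ln \<bar>l r\<bar>)" if r: "r \<in> I" for r
    by (rule rigid[OF mono]) (use trK r r0 a0 in \<open>auto simp: a0_def b0_def\<close>)
  have b0: "b0 \<noteq> 0"
  proof
    assume "b0 = 0"
    hence "K (0 + a0) = K 0" using trK[OF r0, of 0] by (simp add: a0_def b0_def)
    hence "0 + a0 = 0" using Ki by (meson injD)
    thus False using a0 by simp
  qed
  define c where "c = b0 / a0"
  have c0: "c \<noteq> 0" using a0 b0 by (simp add: c_def)
  show ?thesis
  proof (intro exI conjI ballI)
    show "c - 1 \<noteq> -1" using c0 by simp
    fix r assume r: "r \<in> I"
    have l0: "l r \<noteq> 0" and m0: "m r \<noteq> 0" using nz r by auto
    have "ln \<bar>m r\<bar> = c * ln \<bar>l r\<bar>" using rel[OF r] a0 by (simp add: c_def field_simps)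
    hence "exp (ln \<bar>m r\<bar>) = exp (c * ln \<bar>l r\<bar>)" by simp
    hence "\<bar>m r\<bar> = \<bar>l r\<bar> powr c" using l0 m0 by (simp add: powr_def)
    hence "m r = sgn (l r) * \<bar>l r\<bar> powr c" using sgnm[OF r] by (metis sgn_mult_abs)
    also have "\<dots> = pw (1 + (c - 1)) (l r)" by (simp add: pw_def)
    also have "\<dots> = l r * \<bar>l r\<bar> powr (c - 1)" by (rule pw_alpha[symmetric, OF l0])
    finally show "m r = l r * \<bar>l r\<bar> powr (c - 1)" .
  qed
qed



lemma forward:
  fixes I :: "'i set" and S T :: "real^2^2" and p1 p2 q1 q2 :: "'i \<Rightarrow> real"
  assumes invS: "invertible S" and invT: "invertible T"
    and nz: "\<forall>r\<in>I. p1 r \<noteq> 0 \<and> p2 r \<noteq> 0 \<and> q1 r \<noteq> 0 \<and> q2 r \<noteq> 0"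
    and hom: "homeomorphism (UNIV :: pline set) UNIV f g"
    and eq: "\<forall>r\<in>I. \<forall>x. f (mobius (S ** diag2 (p1 r) (p2 r) ** matrix_inv S) x)
                       = mobius (T ** diag2 (q1 r) (q2 r) ** matrix_inv T) (f x)"
  shows "\<exists>\<alpha>::real. \<alpha> \<noteq> -1 \<and> (\<forall>r\<in>I. q1 r / q2 r = (p1 r / p2 r) * \<bar>p1 r / p2 r\<bar> powr \<alpha>)"
proof -
  define l where "l r = p1 r / p2 r" for r
  define m where "m r = q1 r / q2 r" for r
  define h where "h = mobius (matrix_inv T) \<circ> (f \<circ> mobius S)"
  define hi where "hi = (mobius (matrix_inv S) \<circ> g) \<circ> mobius T"
  have homh: "homeomorphism UNIV UNIV h hi" unfolding h_def hi_def
    by (rule homeomorphism_compose[OF homeomorphism_compose[OF homeo_mobius[OF invS] hom] homeo_mobius[OF invT, THEN homeomorphism_symD]])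
  have nz': "\<forall>r\<in>I. l r \<noteq> 0 \<and> m r \<noteq> 0" using nz by (simp add: l_def m_def)
  have eqh: "\<forall>r\<in>I. \<forall>z. h (sc (l r) z) = sc (m r) (h z)"
  proof (intro ballI allI)
    fix r z assume r: "r \<in> I"
    have "h (sc (l r) z) = mobius (matrix_inv T) (f (mobius (S ** diag2 (p1 r) (p2 r) ** matrix_inv S) (mobius S z)))"
      using nz r by (simp add: h_def l_def mobius_conj[OF invS])
    also have "\<dots> = mobius (matrix_inv T) (mobius (T ** diag2 (q1 r) (q2 r) ** matrix_inv T) (f (mobius S z)))"
      using eq r by simp
    also have "f (mobius S z) = mobius T (h z)" by (simp add: h_def mobius_inv1[OF invT])
    also have "mobius (T ** diag2 (q1 r) (q2 r) ** matrix_inv T) (mobius T (h z)) = mobius T (sc (m r) (h z))"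
      using nz r by (simp add: m_def mobius_conj[OF invT])
    also have "mobius (matrix_inv T) (mobius T (sc (m r) (h z))) = sc (m r) (h z)"
      by (rule mobius_inv2[OF invT])
    finally show "h (sc (l r) z) = sc (m r) (h z)" .
  qed
  have "\<exists>\<alpha>. \<alpha> \<noteq> -1 \<and> (\<forall>r\<in>I. m r = l r * \<bar>l r\<bar> powr \<alpha>)"
  proof (cases "\<forall>r\<in>I. \<bar>l r\<bar> = 1")
    case True
    show ?thesis
    proof (intro exI conjI ballI)
      show "(0::real) \<noteq> -1" by simp
      fix r assume r: "r \<in> I"
      have "l r = 1 \<or> l r = -1" using True r by (auto simp: abs_if split: if_splits)
      moreover have "\<forall>z. h (sc (l r) z) = sc (m r) (h z)" using eqh r by blast
      ultimately have "m r = l r" by (rule caseA[OF homh])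
      thus "m r = l r * \<bar>l r\<bar> powr 0" using nz' r by simp
    qed
  next
    case False
    then obtain r0 where "r0 \<in> I" "\<bar>l r0\<bar> \<noteq> 1" by blast
    thus ?thesis using caseB[OF homh nz' eqh] by blast
  qed
  thus ?thesis by (simp add: l_def m_def)
qed

theorem theorem12p1:
  fixes I :: "'i set" and S T :: "real^2^2" and p1 p2 q1 q2 :: "'i \<Rightarrow> real"
  assumes "invertible S" and "invertible T"
    and "\<forall>r\<in>I. p1 r \<noteq> 0 \<and> p2 r \<noteq> 0 \<and> q1 r \<noteq> 0 \<and> q2 r \<noteq> 0"
  shows "(\<exists>f g. homeomorphism (UNIV :: pline set) UNIV f g \<and>
            (\<forall>r\<in>I. \<forall>x. f (mobius (S ** diag2 (p1 r) (p2 r) ** matrix_inv S) x)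
                       = mobius (T ** diag2 (q1 r) (q2 r) ** matrix_inv T) (f x)))
         \<longleftrightarrow> (\<exists>\<alpha>::real. \<alpha> \<noteq> -1 \<and>
               (\<forall>r\<in>I. q1 r / q2 r = (p1 r / p2 r) * \<bar>p1 r / p2 r\<bar> powr \<alpha>))"
proof
  assume "\<exists>f g. homeomorphism (UNIV :: pline set) UNIV f g \<and>
            (\<forall>r\<in>I. \<forall>x. f (mobius (S ** diag2 (p1 r) (p2 r) ** matrix_inv S) x)
                       = mobius (T ** diag2 (q1 r) (q2 r) ** matrix_inv T) (f x))"
  then obtain f g where "homeomorphism (UNIV :: pline set) UNIV f g"
    "\<forall>r\<in>I. \<forall>x. f (mobius (S ** diag2 (p1 r) (p2 r) ** matrix_inv S) x)
                       = mobius (T ** diag2 (q1 r) (q2 r) ** matrix_inv T) (f x)" by blast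
  thus "\<exists>\<alpha>::real. \<alpha> \<noteq> -1 \<and> (\<forall>r\<in>I. q1 r / q2 r = (p1 r / p2 r) * \<bar>p1 r / p2 r\<bar> powr \<alpha>)"
    using forward[OF assms] by blast
next
  assume "\<exists>\<alpha>::real. \<alpha> \<noteq> -1 \<and> (\<forall>r\<in>I. q1 r / q2 r = (p1 r / p2 r) * \<bar>p1 r / p2 r\<bar> powr \<alpha>)"
  then obtain \<alpha> :: real where "\<alpha> \<noteq> -1" "\<forall>r\<in>I. q1 r / q2 r = (p1 r / p2 r) * \<bar>p1 r / p2 r\<bar> powr \<alpha>" by blast
  thus "\<exists>f g. homeomorphism (UNIV :: pline set) UNIV f g \<and>
            (\<forall>r\<in>I. \<forall>x. f (mobius (S ** diag2 (p1 r) (p2 r) ** matrix_inv S) x)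
                       = mobius (T ** diag2 (q1 r) (q2 r) ** matrix_inv T) (f x))"
    using backward[OF assms] by blast
qed


end
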